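(* Let $q$ be a power of an odd prime, write $q-1=2^s r$ with $r$ odd, let $c\in\mathbb{F}_q^*$, and $f(X)=c(X^{q+1}+X^2)$ on $\mathbb{F}_{q^2}$. Then for every divisor $d\neq1$ of $r$ there are $\frac{q\,\varphi(d)}{\mathrm{ord}_d(2)}$ cycles of length $\mathrm{ord}_d(2)$ in the functional graph of $f$, and these are all the cycles of length greater than $1$. For $d=1$ there are $\frac{q\,\varphi(1)}{\mathrm{ord}_1(2)}+1=q+1$ cycles of length $\mathrm{ord}_1(2)=1$.
   Context: The functional graph of $f$ is the directed graph on $\mathbb{F}_{q^2}$ with edges $x\to f(x)$. $\varphi$ is Euler's totient function and $\mathrm{ord}_m(n)$ is the multiplicative order of $n$ modulo $m$. *)

theory Defs
  imports "HOL-Number_Theory.Number_Theory"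
begin

definition cycles_of_length :: "('a \<Rightarrow> 'a) \<Rightarrow> nat \<Rightarrow> 'a set set" where
  "cycles_of_length f n =
     {{(f ^^ i) x | i. i < n} | x. 0 < n \<and> (f ^^ n) x = x \<and>
                                (\<forall>m. 0 < m \<and> m < n \<longrightarrow> (f ^^ m) x \<noteq> x)}"

end

theory Submission
  imports Defs "HOL-Computational_Algebra.Polynomial"
begin


definition period_pts :: "('a \<Rightarrow> 'a) \<Rightarrow> nat \<Rightarrow> 'a set" where
  "period_pts f n = {x. (f ^^ n) x = x \<and> (\<forall>m. 0 < m \<and> m < n \<longrightarrow> (f ^^ m) x \<noteq> x)}"

lemma funpow_comm: "(f ^^ a) ((f ^^ b) x) = (f ^^ b) ((f ^^ a) x)"
  by (metis funpow_add add.commute comp_apply)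

lemma funpow_mod_period:
  assumes "(f ^^ n) x = x"
  shows "(f ^^ i) x = (f ^^ (i mod n)) x"
proof -
  have "(f ^^ (n * j)) x = x" for j
  proof (induction j)
    case (Suc j)
    have "(f ^^ (n * Suc j)) x = (f ^^ (n * j)) ((f ^^ n) x)"
      by (simp add: funpow_add add.commute funpow_comm)
    thus ?case using Suc assms by simp
  qed simp
  hence "(f ^^ (i mod n + n * (i div n))) x = (f ^^ (i mod n)) x"
    by (simp only: funpow_add comp_apply)
  thus ?thesis by simp
qed

lemma card_cycles_of_length:
  fixes f :: "'a::finite \<Rightarrow> 'a"
  assumes "n > 0"
  shows "card (period_pts f n) = n * card (cycles_of_length f n)"
proof -
  define orb where "orb x = {(f ^^ i) x | i. i < n}" for x
  have C: "cycles_of_length f n = orb ` period_pts f n"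
    using assms unfolding cycles_of_length_def period_pts_def orb_def by auto
  have inj: "inj_on (\<lambda>i. (f ^^ i) x) {..<n}" if x: "x \<in> period_pts f n" for x
  proof (rule inj_onI, rule ccontr)
    fix i j assume ij: "i \<in> {..<n}" "j \<in> {..<n}" "(f ^^ i) x = (f ^^ j) x" "i \<noteq> j"
    have *: False if "i < j" "j < n" "(f ^^ i) x = (f ^^ j) x" for i j
    proof -
      have "(f ^^ (n - j + i)) x = (f ^^ (n - j)) ((f ^^ i) x)" by (simp add: funpow_add)
      also have "\<dots> = (f ^^ (n - j)) ((f ^^ j) x)" using that by simp
      also have "\<dots> = (f ^^ (n - j + j)) x" by (simp add: funpow_add)
      also have "\<dots> = (f ^^ n) x" using that by simp
      also have "\<dots> = x" using x by (simp add: period_pts_def)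
      finally show False using x that by (auto simp: period_pts_def)
    qed
    show False using ij *[of i j] *[of j i] by (cases "i < j") auto
  qed
  have orb_img: "orb x = (\<lambda>i. (f ^^ i) x) ` {..<n}" for x unfolding orb_def by auto
  have card_orb: "card (orb x) = n" if "x \<in> period_pts f n" for x
    using inj[OF that] by (simp add: orb_img card_image)
  have orb_sub: "orb x \<subseteq> period_pts f n" if x: "x \<in> period_pts f n" for x
  proof
    fix y assume "y \<in> orb x"
    then obtain i where i: "i < n" "y = (f ^^ i) x" by (auto simp: orb_def)
    have fx: "(f ^^ n) x = x" using x by (simp add: period_pts_def)
    have "(f ^^ n) y = (f ^^ i) ((f ^^ n) x)" using i by (simp add: funpow_comm)
    hence 1: "(f ^^ n) y = y" using fx i by simp
    have 2: "(f ^^ m) y \<noteq> y" if m: "0 < m" "m < n" for m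
    proof
      assume "(f ^^ m) y = y"
      hence "(f ^^ (m + i)) x = (f ^^ i) x" using i by (simp add: funpow_add)
      hence "(f ^^ ((m + i) mod n)) x = (f ^^ i) x" using funpow_mod_period[OF fx] by metis
      moreover have "(m + i) mod n \<noteq> i"
      proof (cases "m + i < n")
        case True thus ?thesis using m by simp
      next
        case False
        hence "(m + i) mod n = m + i - n" using m i by (simp add: mod_if)
        thus ?thesis using m i False by simp
      qed
      ultimately show False using inj[OF x] i assms
        by (meson inj_on_def lessThan_iff mod_less_divisor)
    qed
    show "y \<in> period_pts f n" using 1 2 by (simp add: period_pts_def)
  qed
  have orb_eq: "orb y = orb x" if x: "x \<in> period_pts f n" and y: "y \<in> orb x" for x y
  proof -
    have yP: "y \<in> period_pts f n" using orb_sub[OF x] y by auto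
    obtain i where i: "i < n" "y = (f ^^ i) x" using y by (auto simp: orb_def)
    have fx: "(f ^^ n) x = x" using x by (simp add: period_pts_def)
    have "orb y \<subseteq> orb x"
    proof
      fix z assume "z \<in> orb y"
      then obtain j where j: "j < n" "z = (f ^^ j) y" by (auto simp: orb_def)
      have "z = (f ^^ (j + i)) x" using i j by (simp add: funpow_add)
      also have "\<dots> = (f ^^ ((j + i) mod n)) x" using funpow_mod_period[OF fx] by metis
      finally show "z \<in> orb x" using assms by (auto simp: orb_def)
    qed
    thus ?thesis using card_orb[OF x] card_orb[OF yP]
      by (metis card_subset_eq finite)
  qed
  have U: "\<Union> (cycles_of_length f n) = period_pts f n"
  proof
    show "\<Union> (cycles_of_length f n) \<subseteq> period_pts f n" using C orb_sub by auto
    show "period_pts f n \<subseteq> \<Union> (cycles_of_length f n)"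
    proof
      fix x assume x: "x \<in> period_pts f n"
      have "x \<in> orb x" unfolding orb_def using assms by (auto intro!: exI[of _ 0])
      thus "x \<in> \<Union> (cycles_of_length f n)" using C x by auto
    qed
  qed
  have "n * card (cycles_of_length f n) = card (\<Union> (cycles_of_length f n))"
  proof (rule card_partition)
    show "finite (cycles_of_length f n)" by simp
    show "finite (\<Union> (cycles_of_length f n))" by simp
  next
    fix c assume "c \<in> cycles_of_length f n"
    then obtain x where x: "x \<in> period_pts f n" "c = orb x" using C by auto
    show "card c = n" using card_orb[OF x(1)] x(2) by simp
  next
    fix c1 c2 assume h: "c1 \<in> cycles_of_length f n" "c2 \<in> cycles_of_length f n" "c1 \<noteq> c2"
    obtain x where x: "x \<in> period_pts f n" "c1 = orb x" using h(1) C by auto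
    obtain y where y: "y \<in> period_pts f n" "c2 = orb y" using h(2) C by auto
    show "c1 \<inter> c2 = {}"
    proof (rule ccontr)
      assume "c1 \<inter> c2 \<noteq> {}"
      then obtain z where z: "z \<in> orb x" "z \<in> orb y" using x y by auto
      have "orb z = orb x" by (rule orb_eq[OF x(1) z(1)])
      moreover have "orb z = orb y" by (rule orb_eq[OF y(1) z(2)])
      ultimately show False using h(3) x y by simp
    qed
  qed
  thus ?thesis using U by simp
qed



lemma phi'_totient: "phi' d = totient d"
  unfolding phi'_def totient_def totatives_def
  by (rule arg_cong[where f=card]) auto

locale ffsetup =
  fixes p k q :: nat and c :: "'a::{finite,field}"
  assumes p: "prime p" "odd p" and k: "k \<ge> 1" and q: "q = p ^ k"
    and cardA: "card (UNIV::'a set) = q ^ 2"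
    and c: "c \<noteq> 0" "c ^ q = c"
begin

lemma p_ge: "p \<ge> 3"
proof -
  have "p \<ge> 2" using p prime_ge_2_nat by blast
  moreover have "p \<noteq> 2" using p by auto
  ultimately show ?thesis by simp
qed

lemma q_ge: "q \<ge> 3"
proof -
  have "p \<le> p ^ k" using k p_ge by (simp add: self_le_power)
  thus ?thesis using p_ge q by simp
qed

lemma q_odd: "odd q" using p q by simp

lemma char: "CHAR('a) = p"
proof -
  have pos: "CHAR('a) > 0" by (rule finite_imp_CHAR_pos) simp
  have pr: "prime CHAR('a)" using pos prime_CHAR_semidom by blast
  have "CHAR('a) dvd p ^ (k * 2)" using CHAR_dvd_CARD[where 'a='a] cardA q
    by (simp add: power_mult)
  hence "CHAR('a) dvd p" using pr prime_dvd_power by blast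
  thus ?thesis using pr p by (simp add: primes_dvd_imp_eq)
qed

lemma frob: "(x + y :: 'a) ^ q = x ^ q + y ^ q"
  using char p q by (intro freshmans_dream') auto

lemma pow_card: "(x :: 'a) ^ card (UNIV :: 'a set) = x"
proof (cases "x = 0")
  case False
  have "x * (\<Prod>y\<in>UNIV-{0}. x * y) = x * x ^ (card (UNIV :: 'a set) - 1) * \<Prod>(UNIV-{0})"
    by (simp add: prod.distrib mult_ac)
  also have "x * x ^ (card (UNIV :: 'a set) - 1) = x ^ Suc (card (UNIV :: 'a set) - 1)"
    by (subst power_Suc) auto
  also have "Suc (card (UNIV :: 'a set) - 1) = card (UNIV :: 'a set)"
    using finite_UNIV_card_ge_0[where ?'a = 'a] by simp
  also have "(\<Prod>y\<in>UNIV-{0}. x * y) = (\<Prod>y\<in>UNIV-{0}. y)"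
    by (rule prod.reindex_bij_witness[of _ "\<lambda>y. y / x" "\<lambda>y. x * y"]) (use False in auto)
  finally show ?thesis
    by simp
qed (use finite_UNIV_card_ge_0[where ?'a = 'a] in auto)

lemma qq: "((x :: 'a) ^ q) ^ q = x"
  using pow_card[of x] cardA by (simp add: power_mult[symmetric] power2_eq_square)

definition T :: "'a \<Rightarrow> 'a" where "T x = x ^ q + x"

lemma T_Fq: "T x ^ q = T x"
  by (simp add: T_def frob qq add.commute)

lemma T_add: "T (x + y) = T x + T y"
  by (simp add: T_def frob algebra_simps)

lemma T_0: "T 0 = 0" using q_ge by (simp add: T_def)

lemma T_smul: "a ^ q = a \<Longrightarrow> T (a * x) = a * T x"
  by (simp add: T_def power_mult_distrib distrib_left)

lemma roots_bound:
  fixes P :: "'a poly"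
  assumes "coeff P q = 1" "degree P \<le> q"
  shows "card {x. poly P x = 0} \<le> q"
proof -
  have "P \<noteq> 0" using assms by auto
  hence "card {x. poly P x = 0} \<le> degree P" by (rule card_poly_roots_bound)
  thus ?thesis using assms by simp
qed

lemma coeff_lin: "coeff [:a, b:] q = 0"
proof -
  obtain m where "q = Suc (Suc m)" using q_ge by (intro that[of "q - 2"]) simp
  thus ?thesis by simp
qed

lemma card_ker: "card {x. T x = 0} \<le> q"
proof -
  define P :: "'a poly" where "P = monom 1 q + [:0, 1:]"
  have "coeff P q = 1" by (simp add: P_def coeff_lin)
  moreover have "degree P \<le> q" unfolding P_def using q_ge
    by (intro degree_add_le) (auto simp: degree_monom_le)
  moreover have "poly P x = T x" for x by (simp add: P_def T_def poly_monom)
  ultimately show ?thesis using roots_bound[of P] by simp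
qed

definition Fq :: "'a set" where "Fq = {y. y ^ q = y}"

lemma card_Fq_le: "card Fq \<le> q"
proof -
  define P :: "'a poly" where "P = monom 1 q - [:0, 1:]"
  have "coeff P q = 1" by (simp add: P_def coeff_lin)
  moreover have "degree P \<le> q" unfolding P_def using q_ge
    by (intro degree_diff_le) (auto simp: degree_monom_le)
  moreover have "poly P x = x ^ q - x" for x by (simp add: P_def poly_monom)
  ultimately have "card {x. poly P x = 0} \<le> q" using roots_bound[of P] by simp
  moreover have "{x. poly P x = 0} = Fq" using \<open>\<And>x. poly P x = x ^ q - x\<close> by (auto simp: Fq_def)
  ultimately show ?thesis by simp
qed

lemma fiber_card: "card {x. T x = T x0} = card {x. T x = 0}"
proof -
  have "{x. T x = T x0} = (\<lambda>z. z + x0) ` {x. T x = 0}"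
  proof (rule equalityI; rule subsetI)
    fix x assume "x \<in> {x. T x = T x0}"
    hence "T (x - x0) = 0" using T_add[of "x - x0" x0] by simp
    thus "x \<in> (\<lambda>z. z + x0) ` {x. T x = 0}" by (intro image_eqI[of _ _ "x - x0"]) auto
  next
    fix x assume "x \<in> (\<lambda>z. z + x0) ` {x. T x = 0}"
    thus "x \<in> {x. T x = T x0}" by (auto simp: T_add)
  qed
  moreover have "inj (\<lambda>z::'a. z + x0)" by (simp add: inj_def)
  ultimately show ?thesis by (simp add: card_image inj_on_subset)
qed

lemma counts: "range T = Fq" "card {x. T x = 0} = q" "card Fq = q"
proof -
  have "UNIV = (\<Union>y\<in>range T. {x. T x = y})" by auto
  hence "q ^ 2 = card (\<Union>y\<in>range T. {x. T x = y})" using cardA by simp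
  also have "\<dots> = (\<Sum>y\<in>range T. card {x. T x = y})"
    by (rule card_UN_disjoint) auto
  also have "\<dots> = (\<Sum>y\<in>range T. card {x. T x = 0})"
    by (rule sum.cong) (auto simp: fiber_card)
  also have "\<dots> = card (range T) * card {x. T x = 0}" by simp
  finally have eq: "q * q = card (range T) * card {x. T x = 0}" by (simp add: power2_eq_square)
  have sub: "range T \<subseteq> Fq" using T_Fq by (auto simp: Fq_def)
  have a: "card (range T) \<le> q" using card_mono[OF _ sub] card_Fq_le by simp
  have b: "card {x. T x = 0} \<le> q" by (rule card_ker)
  have c1: "card (range T) = q"
  proof (rule ccontr)
    assume "card (range T) \<noteq> q"
    hence lt: "card (range T) < q" using a by simp
    have "card (range T) * card {x. T x = 0} \<le> card (range T) * q"
      by (rule mult_le_mono2[OF b])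
    also have "\<dots> < q * q" using lt q_ge by simp
    finally show False using eq by simp
  qed
  have c2: "card {x. T x = 0} = q" using eq c1 q_ge by simp
  have c3: "range T = Fq"
    by (rule card_seteq[OF _ sub]) (use c1 card_Fq_le in simp_all)
  have c4: "card Fq = q" using c1 c3 by simp
  show "range T = Fq" by (rule c3)
  show "card {x. T x = 0} = q" by (rule c2)
  show "card Fq = q" by (rule c4)
qed

lemma fiber_q: "y ^ q = y \<Longrightarrow> card {x. T x = y} = q"
proof -
  assume "y ^ q = y"
  hence "y \<in> range T" using counts by (auto simp: Fq_def)
  then obtain x0 where "y = T x0" by auto
  thus ?thesis using fiber_card counts by simp
qed

end


context ffsetup begin

definition F :: "'a \<Rightarrow> 'a" where "F = (\<lambda>x. c * (x ^ (q + 1) + x ^ 2))"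
definition u :: "'a \<Rightarrow> 'a" where "u x = c * T x"

lemma u_Fq: "u x ^ q = u x"
  by (simp add: u_def power_mult_distrib T_Fq c)

lemma F_eq: "F x = x * u x"
  by (simp add: F_def u_def T_def power2_eq_square algebra_simps)

lemma u_F: "u (F x) = u x ^ 2"
proof -
  have "u (F x) = c * T (u x * x)" by (simp add: u_def F_eq mult.commute)
  also have "\<dots> = c * (u x * T x)" by (simp add: T_smul u_Fq)
  also have "\<dots> = u x ^ 2" by (simp add: u_def power2_eq_square algebra_simps)
  finally show ?thesis .
qed

lemma u_iter: "u ((F ^^ m) x) = u x ^ (2 ^ m)"
  by (induction m) (simp_all add: u_F power_mult[symmetric] mult.commute)

lemma F_iter: "(F ^^ m) x = x * u x ^ (2 ^ m - 1)"
proof (induction m)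
  case (Suc m)
  have e: "2 ^ Suc m - 1 = (2 ^ m - 1) + (2 ^ m :: nat)"
    using one_le_power[of "2::nat" m] by simp
  have "(F ^^ Suc m) x = (F ^^ m) x * u ((F ^^ m) x)" by (simp add: F_eq)
  also have "\<dots> = (F ^^ m) x * u x ^ (2 ^ m)" by (simp only: u_iter)
  also have "\<dots> = x * u x ^ (2 ^ m - 1) * u x ^ (2 ^ m)" by (simp only: Suc)
  also have "\<dots> = x * u x ^ (2 ^ Suc m - 1)"
    by (simp only: e power_add mult.assoc)
  finally show ?case .
qed simp

lemma fix_iff: "m > 0 \<Longrightarrow> (F ^^ m) x = x \<longleftrightarrow> x = 0 \<or> u x ^ (2 ^ m - 1) = 1"
proof -
  have "x * w = x \<longleftrightarrow> x = 0 \<or> w = 1" for w :: 'a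
    using mult_cancel_left[of x w 1] by simp
  thus ?thesis by (simp add: F_iter)
qed

definition R :: "'a ring" where
  "R = \<lparr>carrier = UNIV, monoid.mult = (*), one = 1, ring.zero = 0, add = (+)\<rparr>"

lemma field_R: "field R"
proof -
  have "\<exists>y. x + y = 0" for x :: 'a
    using add.right_inverse by blast
  moreover have "x \<noteq> 0 \<Longrightarrow> \<exists>y. x * y = 1" for x :: 'a
    by (rule exI[of _ "inverse x"]) auto
  ultimately show ?thesis
    unfolding R_def using add.right_inverse
    by unfold_locales (auto simp:algebra_simps Units_def)
qed

lemma powR: "x [^]\<^bsub>R\<^esub> (n::nat) = x ^ n"
  by (induction n) (simp_all add: R_def mult.commute)

lemma grp: "group (mult_of R)" by (rule field.field_mult_group[OF field_R])

lemma carrierG: "carrier (mult_of R) = UNIV - {0}" by (simp add: R_def)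

lemma powG: "x [^]\<^bsub>mult_of R\<^esub> (n::nat) = x ^ n" by (simp add: nat_pow_mult_of powR)

definition ordG :: "'a \<Rightarrow> nat" where "ordG x = group.ord (mult_of R) x"

lemma oneG: "\<one>\<^bsub>mult_of R\<^esub> = 1" by (simp add: R_def)

lemma one_iff: "x \<noteq> 0 \<Longrightarrow> x ^ n = 1 \<longleftrightarrow> ordG x dvd n"
  using group.pow_eq_id[OF grp, of x n] by (simp only: carrierG powG ordG_def oneG) simp

lemma orderG: "Coset.order (mult_of R) = q ^ 2 - 1"
proof -
  have "Coset.order (mult_of R) = card (UNIV - {0::'a})" by (simp only: Coset.order_def carrierG)
  also have "\<dots> = q ^ 2 - 1" using cardA by (simp add: card_Diff_singleton)
  finally show ?thesis .
qed

lemma ord_count: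
  assumes d: "d dvd q ^ 2 - 1"
  shows "card {x. x \<noteq> 0 \<and> ordG x = d} = totient d"
proof -
  define N where "N = q ^ 2 - 1"
  have "1 < q ^ 2" by (rule one_less_power) (use q_ge in auto)
  hence N0: "N > 0" unfolding N_def by simp
  have fin: "finite (carrier (mult_of R))" by simp
  obtain a where a: "a \<in> carrier (mult_of R)"
    and gen: "carrier (mult_of R) = {a [^]\<^bsub>R\<^esub> i | i::nat. i \<in> UNIV}"
    using field.finite_field_mult_group_has_gen[OF field_R] by (auto simp: R_def)
  have "carrier (mult_of R) = {a [^]\<^bsub>mult_of R\<^esub> i | i::nat. i \<in> UNIV}"
    using gen by (simp add: nat_pow_mult_of)
  also have "\<dots> = {a [^]\<^bsub>mult_of R\<^esub> i | i. i \<in> {0 .. group.ord (mult_of R) a - 1}}"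
    by (rule group.ord_elems[OF grp fin a])
  also have "\<dots> = (\<lambda>i. a [^]\<^bsub>mult_of R\<^esub> i) ` {0 .. group.ord (mult_of R) a - 1}" by auto
  finally have eqC: "carrier (mult_of R) = (\<lambda>i. a [^]\<^bsub>mult_of R\<^esub> i) ` {0 .. group.ord (mult_of R) a - 1}" .
  have "card (carrier (mult_of R)) \<le> card {0 .. group.ord (mult_of R) a - 1}"
    unfolding eqC by (rule card_image_le) simp
  hence "N \<le> group.ord (mult_of R) a"
    using orderG group.ord_ge_1[OF grp fin a] by (simp add: Coset.order_def N_def)
  moreover have "group.ord (mult_of R) a \<le> N"
    using group.ord_le_group_order[OF grp fin a] orderG by (simp add: N_def)
  ultimately have orda: "group.ord (mult_of R) a = N" by simp
  have dpos: "d > 0" using d N0 N_def by (metis dvd_0_left_iff neq0_conv)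
  obtain e where e: "N = d * e" using d unfolding N_def by (elim dvdE)
  have e0: "e \<noteq> 0" using e N0 by (intro notI) simp
  have Nd: "N div d = e" using e dpos by simp
  have k: "N div d dvd group.ord (mult_of R) a" "N div d \<noteq> 0"
    using orda e e0 Nd by simp_all
  have "group.ord (mult_of R) (a [^]\<^bsub>mult_of R\<^esub> (N div d)) = N div (N div d)"
    using group.ord_pow[OF grp a k] orda by simp
  also have "\<dots> = d" using e e0 Nd by simp
  finally have ex: "\<exists>b\<in>carrier (mult_of R). group.ord (mult_of R) b = d"
    using monoid.nat_pow_closed[OF group.is_monoid[OF grp] a] by blast
  have c1: "card {b \<in> carrier (mult_of R). group.ord (mult_of R) b = d} = phi' d"
  proof -
    have f1: "finite (carrier R)" by (simp add: R_def)
    have f2: "d dvd Coset.order (mult_of R)" using d orderG by simp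
    show ?thesis by (rule field.num_elems_of_ord_eq_phi'[OF field_R f1 f2 ex])
  qed
  have s1: "{b \<in> carrier (mult_of R). group.ord (mult_of R) b = d} = {x. x \<noteq> 0 \<and> ordG x = d}"
    unfolding carrierG ordG_def by blast
  show ?thesis using c1 unfolding s1 phi'_totient .
qed

end


lemma cong_pow2: "[(2::nat) ^ m = 1] (mod d) \<longleftrightarrow> d dvd 2 ^ m - 1"
  by (rule cong_altdef_nat) simp

lemma ord_char:
  assumes "n > 0"
  shows "(d dvd 2 ^ n - 1 \<and> (\<forall>m. 0 < m \<and> m < n \<longrightarrow> \<not> d dvd 2 ^ m - 1)) \<longleftrightarrow> ord d (2::nat) = n"
proof
  assume h: "d dvd 2 ^ n - 1 \<and> (\<forall>m. 0 < m \<and> m < n \<longrightarrow> \<not> d dvd 2 ^ m - 1)"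
  hence "ord d 2 dvd n" using ord_divides cong_pow2 by blast
  hence le: "ord d 2 \<le> n" "ord d 2 > 0" using assms by (auto intro: dvd_imp_le)
  show "ord d 2 = n"
  proof (rule ccontr)
    assume "ord d 2 \<noteq> n"
    hence "ord d 2 < n" using le by simp
    moreover have "[2 ^ ord d 2 = 1] (mod d)" by (rule ord)
    ultimately show False using h le cong_pow2 by blast
  qed
next
  assume h: "ord d (2::nat) = n"
  show "d dvd 2 ^ n - 1 \<and> (\<forall>m. 0 < m \<and> m < n \<longrightarrow> \<not> d dvd 2 ^ m - 1)"
    using ord[of 2 d] ord_minimal[of _ d 2] h cong_pow2 by auto
qed

context ffsetup begin

lemma u0: "u 0 = 0" by (simp add: u_def T_0)

lemma ordG_pos: "x \<noteq> 0 \<Longrightarrow> ordG x > 0"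
  using group.ord_ge_1[OF grp, of x] by (simp add: carrierG ordG_def R_def)

lemma ordG_dvd_q1: "x \<noteq> 0 \<Longrightarrow> x ^ q = x \<Longrightarrow> ordG x dvd q - 1"
proof -
  assume x: "x \<noteq> 0" "x ^ q = x"
  have "x ^ q = x * x ^ (q - 1)" using q_ge by (simp add: power_eq_if[of x q])
  hence "x * x ^ (q - 1) = x * 1" using x by simp
  hence "x ^ (q - 1) = 1" using x by simp
  thus ?thesis using one_iff x by blast
qed

lemma in_Fq: "x \<noteq> 0 \<Longrightarrow> ordG x dvd q - 1 \<Longrightarrow> x ^ q = x"
proof -
  assume x: "x \<noteq> 0" "ordG x dvd q - 1"
  hence "x ^ (q - 1) = 1" using one_iff by blast
  hence "x * x ^ (q - 1) = x" by simp
  moreover have "x ^ q = x * x ^ (q - 1)" using q_ge by (simp add: power_eq_if[of x q])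
  ultimately show ?thesis by simp
qed

lemma fiber_u: "v ^ q = v \<Longrightarrow> card {x. u x = v} = q"
proof -
  assume v: "v ^ q = v"
  have "{x. u x = v} = {x. T x = v / c}" using c by (auto simp: u_def field_simps)
  moreover have "(v / c) ^ q = v / c" using v c by (simp add: power_divide)
  ultimately show ?thesis using fiber_q by simp
qed

lemma dvd_q2: "q - 1 dvd q ^ 2 - 1"
proof -
  have "q ^ 2 - 1 = (q - 1) * (q + 1)" using q_ge by (simp add: power2_eq_square algebra_simps)
  thus ?thesis by simp
qed

lemma card_ord_pts:
  assumes d: "d dvd q - 1"
  shows "card {x. u x \<noteq> 0 \<and> ordG (u x) = d} = q * totient d"
proof -
  define Od where "Od = {v. v \<noteq> 0 \<and> ordG v = d}"
  have "{x. u x \<noteq> 0 \<and> ordG (u x) = d} = (\<Union>v\<in>Od. {x. u x = v})" by (auto simp: Od_def)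
  moreover have "card (\<Union>v\<in>Od. {x. u x = v}) = (\<Sum>v\<in>Od. card {x. u x = v})"
    by (rule card_UN_disjoint) auto
  ultimately have "card {x. u x \<noteq> 0 \<and> ordG (u x) = d} = (\<Sum>v\<in>Od. card {x. u x = v})"
    by simp
  also have "\<dots> = (\<Sum>v\<in>Od. q)"
  proof (rule sum.cong)
    fix v assume "v \<in> Od"
    hence "v \<noteq> 0" "ordG v dvd q - 1" using d by (auto simp: Od_def)
    hence "v ^ q = v" by (rule in_Fq)
    thus "card {x. u x = v} = q" by (rule fiber_u)
  qed simp
  also have "\<dots> = q * totient d" using ord_count[of d] dvd_trans[OF d dvd_q2] by (simp add: Od_def)
  finally show ?thesis .
qed

lemma period_pts_gt1:
  fixes s r :: nat
  assumes n: "n > 1" and sr: "q - 1 = 2 ^ s * r"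
  shows "period_pts F n = (\<Union>d\<in>{d. d dvd r \<and> d \<noteq> 1 \<and> ord d 2 = n}. {x. u x \<noteq> 0 \<and> ordG (u x) = d})"
proof -
  have iff: "x \<in> period_pts F n \<longleftrightarrow> u x \<noteq> 0 \<and> ord (ordG (u x)) 2 = n" for x
  proof -
    have "x \<in> period_pts F n \<longleftrightarrow>
          (x = 0 \<or> u x ^ (2 ^ n - 1) = 1) \<and> (\<forall>m. 0 < m \<and> m < n \<longrightarrow> x \<noteq> 0 \<and> u x ^ (2 ^ m - 1) \<noteq> 1)"
      using n by (simp add: period_pts_def fix_iff)
    also have "\<dots> \<longleftrightarrow> x \<noteq> 0 \<and> u x ^ (2 ^ n - 1) = 1 \<and> (\<forall>m. 0 < m \<and> m < n \<longrightarrow> u x ^ (2 ^ m - 1) \<noteq> 1)"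
      using n by auto
    also have "\<dots> \<longleftrightarrow> u x \<noteq> 0 \<and> u x ^ (2 ^ n - 1) = 1 \<and> (\<forall>m. 0 < m \<and> m < n \<longrightarrow> u x ^ (2 ^ m - 1) \<noteq> 1)"
    proof -
      have "(1::nat) < 2 ^ n" using n by (intro one_less_power) auto
      hence pos: "2 ^ n - 1 > (0::nat)" by simp
      have "u x ^ (2 ^ n - 1) = 1 \<Longrightarrow> u x \<noteq> 0"
        using pos by (auto simp: power_0_left)
      thus ?thesis using u0 by auto
    qed
    also have "\<dots> \<longleftrightarrow> u x \<noteq> 0 \<and> ord (ordG (u x)) 2 = n"
      using one_iff ord_char[of n "ordG (u x)"] n by auto
    finally show ?thesis .
  qed
  have dr: "ordG (u x) dvd r \<and> ordG (u x) \<noteq> 1" if "u x \<noteq> 0" "ord (ordG (u x)) 2 = n" for x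
  proof
    have "ordG (u x) dvd 2 ^ s * r" using ordG_dvd_q1[OF that(1) u_Fq] sr by simp
    moreover have "coprime (ordG (u x)) 2" using that n ord_gt_0_iff[of "ordG (u x)" 2] by simp
    hence "coprime (ordG (u x)) (2 ^ s)" by simp
    ultimately show "ordG (u x) dvd r" using coprime_dvd_mult_right_iff by blast
    show "ordG (u x) \<noteq> 1" using that n by auto
  qed
  show ?thesis
  proof (rule equalityI; rule subsetI)
    fix x
    assume "x \<in> period_pts F n"
    hence h: "u x \<noteq> 0" "ord (ordG (u x)) 2 = n" using iff by auto
    thus "x \<in> (\<Union>d\<in>{d. d dvd r \<and> d \<noteq> 1 \<and> ord d 2 = n}. {x. u x \<noteq> 0 \<and> ordG (u x) = d})"
      using dr[OF h] by blast
  next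
    fix x
    assume "x \<in> (\<Union>d\<in>{d. d dvd r \<and> d \<noteq> 1 \<and> ord d 2 = n}. {x. u x \<noteq> 0 \<and> ordG (u x) = d})"
    then obtain d where "d dvd r" "ord d 2 = n" "u x \<noteq> 0" "ordG (u x) = d" by blast
    thus "x \<in> period_pts F n" using iff by simp
  qed
qed

lemma card_period_gt1:
  fixes s r :: nat
  assumes n: "n > 1" and sr: "q - 1 = 2 ^ s * r" and r: "odd r"
  shows "card (period_pts F n) = (\<Sum>d\<in>{d. d dvd r \<and> d \<noteq> 1 \<and> ord d 2 = n}. q * totient d)"
proof -
  have fin: "finite {d. d dvd r \<and> d \<noteq> 1 \<and> ord d 2 = n}"
  proof (rule finite_subset[of _ "{..r}"])
    have r0: "r > 0" using r by (rule odd_pos)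
    show "{d. d dvd r \<and> d \<noteq> 1 \<and> ord d 2 = n} \<subseteq> {..r}"
    proof
      fix d assume "d \<in> {d. d dvd r \<and> d \<noteq> 1 \<and> ord d 2 = n}"
      hence "d dvd r" by simp
      hence "d \<le> r" using r0 by (rule dvd_imp_le)
      thus "d \<in> {..r}" by simp
    qed
  qed simp
  have "card (period_pts F n) = (\<Sum>d\<in>{d. d dvd r \<and> d \<noteq> 1 \<and> ord d 2 = n}. card {x. u x \<noteq> 0 \<and> ordG (u x) = d})"
    unfolding period_pts_gt1[OF n sr] using fin by (subst card_UN_disjoint) auto
  also have "\<dots> = (\<Sum>d\<in>{d. d dvd r \<and> d \<noteq> 1 \<and> ord d 2 = n}. q * totient d)"
  proof (rule sum.cong)
    fix d assume "d \<in> {d. d dvd r \<and> d \<noteq> 1 \<and> ord d 2 = n}"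
    hence "d dvd r" by simp
    hence "d dvd q - 1" unfolding sr by (rule dvd_mult)
    thus "card {x. u x \<noteq> 0 \<and> ordG (u x) = d} = q * totient d" by (rule card_ord_pts)
  qed simp
  finally show ?thesis .
qed

lemma card_period_1: "card (period_pts F 1) = q + 1"
proof -
  have "period_pts F 1 = insert 0 {x. T x = 1 / c}"
  proof -
    have "x \<in> period_pts F 1 \<longleftrightarrow> x = 0 \<or> u x = 1" for x
      using fix_iff[of 1 x] by (auto simp: period_pts_def)
    moreover have "u x = 1 \<longleftrightarrow> T x = 1 / c" for x
      using c by (auto simp: u_def field_simps)
    ultimately show ?thesis by blast
  qed
  moreover have "0 \<notin> {x. T x = 1 / c}" using c by (simp add: T_0)
  moreover have "(1 / c) ^ q = 1 / c" using c by (simp add: power_divide)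
  ultimately show ?thesis using fiber_q by simp
qed

end

theorem theorem17:
  fixes p k q s r :: nat and c :: "'a::{finite,field}"
  assumes "prime p" and "odd p" and "k \<ge> 1" and "q = p ^ k"
    and "card (UNIV::'a set) = q ^ 2"
    and "q - 1 = 2 ^ s * r" and "odd r"
    and "c \<noteq> 0" and "c ^ q = c"
  defines "f \<equiv> (\<lambda>x::'a. c * (x ^ (q + 1) + x ^ 2))"
  shows "(\<forall>n>1. real (card (cycles_of_length f n)) =
            (\<Sum>d\<in>{d. d dvd r \<and> d \<noteq> 1 \<and> ord d 2 = n}. real q * real (totient d) / real n))
       \<and> card (cycles_of_length f 1) = q * totient 1 div ord 1 (2::nat) + 1
       \<and> card (cycles_of_length f 1) = q + 1 \<and> ord 1 (2::nat) = 1"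
proof -
  interpret ffsetup p k q c
    using assms by unfold_locales auto
  have fF: "f = F" by (simp add: f_def F_def)
  have A: "real (card (cycles_of_length f n)) =
            (\<Sum>d\<in>{d. d dvd r \<and> d \<noteq> 1 \<and> ord d 2 = n}. real q * real (totient d) / real n)"
    if n: "n > 1" for n
  proof -
    have "card (period_pts F n) = n * card (cycles_of_length F n)"
      using card_cycles_of_length[of n F] n by simp
    hence "real (card (cycles_of_length F n)) = real (card (period_pts F n)) / real n"
      using n by (simp add: field_simps)
    also have "real (card (period_pts F n)) =
        (\<Sum>d\<in>{d. d dvd r \<and> d \<noteq> 1 \<and> ord d 2 = n}. real q * real (totient d))"
      using card_period_gt1[OF n assms(6) assms(7)] by simp
    finally show ?thesis using fF by (simp add: sum_divide_distrib)
  qed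
  have B: "card (cycles_of_length f 1) = q + 1"
    using card_cycles_of_length[of 1 F] card_period_1 fF by simp
  show ?thesis using A B by simp
qed

end
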